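(* Let $G$ be a graph and let $S\subseteq V(G)$ be a twin cover of $G$ with $|S|=k$. Let $C_i$ and $C_j$ be connected components of $G-S$, each with more than $k$ vertices, such that $|C_i|\equiv|C_j|\pmod 2$ and $N(u)\cap S=N(w)\cap S$ for $u\in C_i$, $w\in C_j$. If $\sigma$ is a layout of $G$ and $q$ is an integer such that every vertex $v\in C_i\cup C_j$ satisfies $|\{s\in S: s<_\sigma v\}|+1=q$, then $\gamma^+(C_i,\sigma)=\gamma^+(C_j,\sigma)$.
   Context: All graphs are finite, simple and undirected. For a layout (linear ordering) $\sigma$ of $V(G)$ and $v\in V(G)$, $N_L(v,\sigma)$ and $N_R(v,\sigma)$ are the sets of neighbours of $v$ preceding and following $v$, and $\mathcal{I}(v,\sigma)=\big||N_L(v,\sigma)|-|N_R(v,\sigma)|\big|$. A twin cover of $G$ is a set $S\subseteq V(G)$ such that every connected component $X$ of $G-S$ is a set of true twins in $G$ ($N[u]=N[v]$ for all $u,v\in X$). Let $\gamma(\ell)=\ell^2/2$ if $\ell$ is even and $\gamma(\ell)=(\ell^2-1)/2$ if $\ell$ is odd. For a component $C$ of $G-S$, $\gamma^+(C,\sigma)=\sum_{v\in C}\mathcal{I}(v,\sigma)-\gamma(|C|)$ (excess imbalance). The number $|\{s\in S:s<_\sigma v\}|+1$ is the location of $v$ in $\sigma$; the hypothesis says $C_i$ and $C_j$ are placed at the same location. *)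

theory Defs
  imports Main
begin

definition graph :: "'a set \<Rightarrow> ('a \<Rightarrow> 'a \<Rightarrow> bool) \<Rightarrow> bool" where
  "graph V E \<longleftrightarrow> finite V \<and> (\<forall>u v. E u v \<longrightarrow> u \<in> V \<and> v \<in> V)
     \<and> (\<forall>u v. E u v \<longrightarrow> E v u) \<and> (\<forall>v. \<not> E v v)"

definition nbhd :: "'a set \<Rightarrow> ('a \<Rightarrow> 'a \<Rightarrow> bool) \<Rightarrow> 'a \<Rightarrow> 'a set" where
  "nbhd V E v = {u \<in> V. E v u}"

definition closed_nbhd :: "'a set \<Rightarrow> ('a \<Rightarrow> 'a \<Rightarrow> bool) \<Rightarrow> 'a \<Rightarrow> 'a set" where
  "closed_nbhd V E v = insert v (nbhd V E v)"

definition reach_in :: "'a set \<Rightarrow> ('a \<Rightarrow> 'a \<Rightarrow> bool) \<Rightarrow> 'a \<Rightarrow> 'a \<Rightarrow> bool" where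
  "reach_in W E = (\<lambda>x y. x \<in> W \<and> y \<in> W \<and> E x y)\<^sup>*\<^sup>*"

definition component_of :: "'a set \<Rightarrow> ('a \<Rightarrow> 'a \<Rightarrow> bool) \<Rightarrow> 'a set \<Rightarrow> bool" where
  "component_of W E X \<longleftrightarrow> (\<exists>x\<in>W. X = {y \<in> W. reach_in W E x y})"

definition component_minus :: "'a set \<Rightarrow> ('a \<Rightarrow> 'a \<Rightarrow> bool) \<Rightarrow> 'a set \<Rightarrow> 'a set \<Rightarrow> bool" where
  "component_minus V E S X \<longleftrightarrow> component_of (V - S) E X"

definition true_twins :: "'a set \<Rightarrow> ('a \<Rightarrow> 'a \<Rightarrow> bool) \<Rightarrow> 'a set \<Rightarrow> bool" where
  "true_twins V E X \<longleftrightarrow> (\<forall>u\<in>X. \<forall>v\<in>X. closed_nbhd V E u = closed_nbhd V E v)"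

definition twin_cover :: "'a set \<Rightarrow> ('a \<Rightarrow> 'a \<Rightarrow> bool) \<Rightarrow> 'a set \<Rightarrow> bool" where
  "twin_cover V E S \<longleftrightarrow> S \<subseteq> V \<and> (\<forall>X. component_minus V E S X \<longrightarrow> true_twins V E X)"

definition layout :: "'a set \<Rightarrow> 'a list \<Rightarrow> bool" where
  "layout V \<sigma> \<longleftrightarrow> distinct \<sigma> \<and> set \<sigma> = V"

definition before :: "'a list \<Rightarrow> 'a \<Rightarrow> 'a \<Rightarrow> bool" where
  "before \<sigma> u v \<longleftrightarrow> (\<exists>i j. i < j \<and> j < length \<sigma> \<and> \<sigma> ! i = u \<and> \<sigma> ! j = v)"

definition NL :: "'a set \<Rightarrow> ('a \<Rightarrow> 'a \<Rightarrow> bool) \<Rightarrow> 'a \<Rightarrow> 'a list \<Rightarrow> 'a set" where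
  "NL V E v \<sigma> = {u \<in> nbhd V E v. before \<sigma> u v}"

definition NR :: "'a set \<Rightarrow> ('a \<Rightarrow> 'a \<Rightarrow> bool) \<Rightarrow> 'a \<Rightarrow> 'a list \<Rightarrow> 'a set" where
  "NR V E v \<sigma> = {u \<in> nbhd V E v. before \<sigma> v u}"

definition imbalance :: "'a set \<Rightarrow> ('a \<Rightarrow> 'a \<Rightarrow> bool) \<Rightarrow> 'a \<Rightarrow> 'a list \<Rightarrow> int" where
  "imbalance V E v \<sigma> = \<bar>int (card (NL V E v \<sigma>)) - int (card (NR V E v \<sigma>))\<bar>"

definition gamma :: "nat \<Rightarrow> int" where
  "gamma l = (if even l then int (l^2) div 2 else (int (l^2) - 1) div 2)"

definition excess_imbalance :: "'a set \<Rightarrow> ('a \<Rightarrow> 'a \<Rightarrow> bool) \<Rightarrow> 'a set \<Rightarrow> 'a list \<Rightarrow> int" where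
  "excess_imbalance V E C \<sigma> = (\<Sum>v\<in>C. imbalance V E v \<sigma>) - gamma (card C)"

definition location :: "'a set \<Rightarrow> 'a list \<Rightarrow> 'a \<Rightarrow> nat" where
  "location S \<sigma> v = card {s \<in> S. before \<sigma> s v} + 1"

end

theory Submission imports Defs begin

definition Ssum :: "nat \<Rightarrow> int \<Rightarrow> int" where
  "Ssum m d = (\<Sum>i<m. \<bar>2 * int i - (int m - 1) + d\<bar>)"

lemma Ssum_step: assumes "\<bar>d\<bar> \<le> int m"
  shows "Ssum (Suc (Suc m)) d = Ssum m d + 2 * int m + 2"
proof -
  have "Ssum (Suc (Suc m)) d = \<bar>- (int m + 1) + d\<bar> + (\<Sum>i<Suc m. \<bar>2 * int (Suc i) - (int m + 1) + d\<bar>)"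
    unfolding Ssum_def by (subst sum.lessThan_Suc_shift) simp
  also have "\<dots> = \<bar>- (int m + 1) + d\<bar> + \<bar>int m + 1 + d\<bar> + (\<Sum>i<m. \<bar>2 * int (Suc i) - (int m + 1) + d\<bar>)"
    by (simp add: algebra_simps)
  also have "(\<Sum>i<m. \<bar>2 * int (Suc i) - (int m + 1) + d\<bar>) = Ssum m d"
    unfolding Ssum_def by (rule sum.cong) auto
  finally show ?thesis using assms by simp
qed

lemma Ssum_plus: assumes "\<bar>d\<bar> \<le> int m"
  shows "Ssum (m + 2 * j) d - int ((m + 2*j)^2) div 2 = Ssum m d - int (m^2) div 2"
proof (induction j)
  case 0 then show ?case by simp
next
  case (Suc j)
  have "\<bar>d\<bar> \<le> int (m + 2 * j)" using assms by simp
  from Ssum_step[OF this]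
  have "Ssum (m + 2 * Suc j) d = Ssum (m + 2*j) d + 2 * int (m+2*j) + 2"
    by (simp add: algebra_simps)
  moreover have "int ((m + 2 * Suc j)^2) = int ((m + 2*j)^2) + 2 * (2 * int (m+2*j) + 2)"
    by (simp add: power2_eq_square algebra_simps)
  ultimately show ?case using Suc by simp
qed

lemma Ssum_eq: assumes "\<bar>d\<bar> \<le> int m1" "\<bar>d\<bar> \<le> int m2" "m1 mod 2 = m2 mod 2"
  shows "Ssum m1 d - int (m1^2) div 2 = Ssum m2 d - int (m2^2) div 2"
proof -
  { fix a b :: nat assume "\<bar>d\<bar> \<le> int a" "a \<le> b" "a mod 2 = b mod 2"
    then obtain j where "b = a + 2 * j"
      by (metis add_diff_inverse_nat le_imp_less_or_eq mod_eq_dvd_iff_nat not_less_iff_gr_or_eq dvd_def)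
    hence "Ssum b d - int (b^2) div 2 = Ssum a d - int (a^2) div 2"
      using Ssum_plus \<open>\<bar>d\<bar> \<le> int a\<close> by simp }
  note * = this
  show ?thesis
  proof (cases "m1 \<le> m2")
    case True then show ?thesis using *[of m1 m2] assms by simp
  next
    case False then show ?thesis using *[of m2 m1] assms by simp
  qed
qed

lemma gamma_eq: "gamma l = int (l^2) div 2"
proof (cases "even l")
  case True then show ?thesis by (simp add: gamma_def)
next
  case False
  hence "odd (int (l^2))" by simp
  then obtain t where "int (l^2) = 2*t+1" by (metis oddE)
  then show ?thesis using False by (simp add: gamma_def)
qed


definition pos :: "'a list \<Rightarrow> 'a \<Rightarrow> nat" where
  "pos \<sigma> v = (THE i. i < length \<sigma> \<and> \<sigma> ! i = v)"

lemma pos_prop: assumes "distinct \<sigma>" "v \<in> set \<sigma>"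
  shows "pos \<sigma> v < length \<sigma> \<and> \<sigma> ! pos \<sigma> v = v"
  unfolding pos_def using theI'[OF distinct_Ex1[OF assms]] .

lemma pos_nth: assumes "distinct \<sigma>" "i < length \<sigma>"
  shows "pos \<sigma> (\<sigma> ! i) = i"
  unfolding pos_def using assms by (auto intro!: the_equality simp: nth_eq_iff_index_eq)

lemma pos_inj: assumes "distinct \<sigma>" "u \<in> set \<sigma>" "v \<in> set \<sigma>" "pos \<sigma> u = pos \<sigma> v"
  shows "u = v"
  using pos_prop[OF assms(1,2)] pos_prop[OF assms(1,3)] assms(4) by metis

lemma before_iff: assumes "distinct \<sigma>"
  shows "before \<sigma> u v \<longleftrightarrow> u \<in> set \<sigma> \<and> v \<in> set \<sigma> \<and> pos \<sigma> u < pos \<sigma> v"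
proof
  assume "before \<sigma> u v"
  then obtain i j where "i < j" "j < length \<sigma>" "\<sigma> ! i = u" "\<sigma> ! j = v" unfolding before_def by blast
  then show "u \<in> set \<sigma> \<and> v \<in> set \<sigma> \<and> pos \<sigma> u < pos \<sigma> v"
    using assms by (auto simp: pos_nth)
next
  assume "u \<in> set \<sigma> \<and> v \<in> set \<sigma> \<and> pos \<sigma> u < pos \<sigma> v"
  then show "before \<sigma> u v" unfolding before_def
    using pos_prop[OF assms, of u] pos_prop[OF assms, of v]
    by (intro exI[of _ "pos \<sigma> u"] exI[of _ "pos \<sigma> v"]) auto
qed

lemma comp_facts:
  assumes g: "graph V E" and tc: "twin_cover V E S" and c: "component_minus V E S C" and v: "v \<in> C"
  shows "C \<subseteq> V - S" "finite C" "nbhd V E v = (C - {v}) \<union> (nbhd V E v \<inter> S)"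
proof -
  obtain x where x: "x \<in> V - S" and C: "C = {y \<in> V - S. reach_in (V - S) E x y}"
    using c unfolding component_minus_def component_of_def by blast
  show "C \<subseteq> V - S" using C by blast
  thus "finite C" using g unfolding graph_def by (meson finite_Diff finite_subset)
  have tw: "true_twins V E C" using tc c unfolding twin_cover_def by blast
  show "nbhd V E v = (C - {v}) \<union> (nbhd V E v \<inter> S)"
  proof
    show "nbhd V E v \<subseteq> C - {v} \<union> nbhd V E v \<inter> S"
    proof
      fix u assume u: "u \<in> nbhd V E v"
      hence uV: "u \<in> V" and e: "E v u" unfolding nbhd_def by auto
      have "u \<noteq> v" using e g unfolding graph_def by auto
      moreover have "u \<in> S \<or> u \<in> C"
      proof (cases "u \<in> S")
        case False
        have "reach_in (V - S) E x v" using v C by blast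
        hence "reach_in (V - S) E x u" unfolding reach_in_def
          using e False uV v C by (auto intro: rtranclp.rtrancl_into_rtrancl)
        then show ?thesis using C False uV by blast
      qed simp
      ultimately show "u \<in> C - {v} \<union> nbhd V E v \<inter> S" using u by blast
    qed
  next
    show "C - {v} \<union> nbhd V E v \<inter> S \<subseteq> nbhd V E v"
    proof
      fix u assume "u \<in> C - {v} \<union> nbhd V E v \<inter> S"
      then show "u \<in> nbhd V E v"
      proof
        assume u: "u \<in> C - {v}"
        have "closed_nbhd V E u = closed_nbhd V E v" using tw u v unfolding true_twins_def by blast
        hence "u \<in> insert v (nbhd V E v)" unfolding closed_nbhd_def by blast
        then show ?thesis using u by blast
      qed blast
    qed
  qed
qed


lemma rank_bij:
  fixes p :: "'a \<Rightarrow> nat"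
  assumes "finite C" "inj_on p C"
  shows "bij_betw (\<lambda>v. card {u\<in>C. p u < p v}) C {..<card C}"
proof -
  let ?r = "\<lambda>v. card {u\<in>C. p u < p v}"
  have lt: "?r v < card C" if "v \<in> C" for v
    using that assms(1) by (intro psubset_card_mono) auto
  have mono: "?r u < ?r v" if "u \<in> C" "v \<in> C" "p u < p v" for u v
    using that assms(1) by (intro psubset_card_mono) auto
  have inj: "inj_on ?r C"
  proof (rule inj_onI)
    fix u v assume uv: "u \<in> C" "v \<in> C" "?r u = ?r v"
    show "u = v"
    proof (rule ccontr)
      assume "u \<noteq> v"
      hence "p u \<noteq> p v" using assms(2) uv by (meson inj_on_contraD)
      then show False using mono[of u v] mono[of v u] uv by linarith
    qed
  qed
  have "?r ` C \<subseteq> {..<card C}" using lt by auto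
  moreover have "card (?r ` C) = card {..<card C}" using card_image[OF inj] by simp
  ultimately have "?r ` C = {..<card C}" by (intro card_subset_eq) auto
  then show ?thesis using inj unfolding bij_betw_def by blast
qed

lemma comp_sum:
  assumes g: "graph V E" and tc: "twin_cover V E S" and c: "component_minus V E S C"
    and lay: "layout V \<sigma>" and ne: "C \<noteq> {}"
    and T: "\<forall>v\<in>C. nbhd V E v \<inter> S = T" and P: "\<forall>v\<in>C. {s\<in>S. before \<sigma> s v} = P"
  shows "(\<Sum>v\<in>C. imbalance V E v \<sigma>) = Ssum (card C) (int (card (T \<inter> P)) - int (card (T - P)))"
proof -
  have dist: "distinct \<sigma>" and sV: "set \<sigma> = V" using lay unfolding layout_def by auto
  have fV: "finite V" using g unfolding graph_def by auto
  have SV: "S \<subseteq> V" using tc unfolding twin_cover_def by auto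
  obtain v0 where v0: "v0 \<in> C" using ne by blast
  have CV: "C \<subseteq> V - S" and fC: "finite C" using comp_facts[OF g tc c v0] by auto
  have TS: "T \<subseteq> S" using T v0 by blast
  have fT: "finite T" using finite_subset[OF TS finite_subset[OF SV fV]] .
  let ?m = "card C"
  let ?d = "int (card (T \<inter> P)) - int (card (T - P))"
  define r where "r v = card {u\<in>C. pos \<sigma> u < pos \<sigma> v}" for v
  have bef: "before \<sigma> u v \<longleftrightarrow> pos \<sigma> u < pos \<sigma> v" if "u \<in> V" "v \<in> V" for u v
    using before_iff[OF dist] that sV by auto
  have imb: "imbalance V E v \<sigma> = \<bar>2 * int (r v) - (int ?m - 1) + ?d\<bar>" if v: "v \<in> C" for v
  proof -
    have nb: "nbhd V E v = (C - {v}) \<union> T" using comp_facts(3)[OF g tc c v] T v by auto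
    have vV: "v \<in> V" "v \<notin> S" using CV v by auto
    have Pv: "{s\<in>S. before \<sigma> s v} = P" using P v by auto
    have NL: "NL V E v \<sigma> = {u\<in>C. pos \<sigma> u < pos \<sigma> v} \<union> (T \<inter> P)"
      unfolding NL_def nb using bef CV TS SV vV Pv by auto
    have NR: "NR V E v \<sigma> = {u\<in>C. pos \<sigma> v < pos \<sigma> u} \<union> (T - P)"
    proof -
      have "u \<in> T \<Longrightarrow> before \<sigma> v u \<longleftrightarrow> u \<notin> P" for u
      proof -
        assume u: "u \<in> T"
        hence uV: "u \<in> V" "u \<in> S" using TS SV by auto
        have "u \<noteq> v" using uV vV by auto
        hence "pos \<sigma> u \<noteq> pos \<sigma> v" using pos_inj[OF dist] uV vV sV by auto
        then show ?thesis using bef[OF uV(1) vV(1)] bef[OF vV(1) uV(1)] Pv uV by auto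
      qed
      then show ?thesis unfolding NR_def nb using bef CV TS SV vV by auto
    qed
    have d1: "{u\<in>C. pos \<sigma> u < pos \<sigma> v} \<inter> (T \<inter> P) = {}"
      "{u\<in>C. pos \<sigma> v < pos \<sigma> u} \<inter> (T - P) = {}" using CV TS by auto
    have cNL: "card (NL V E v \<sigma>) = r v + card (T \<inter> P)"
      unfolding NL r_def using card_Un_disjoint[OF _ _ d1(1)] fC fT by auto
    have split: "C - {v} = {u\<in>C. pos \<sigma> u < pos \<sigma> v} \<union> {u\<in>C. pos \<sigma> v < pos \<sigma> u}"
    proof -
      have "u \<in> C \<Longrightarrow> u \<noteq> v \<Longrightarrow> pos \<sigma> u \<noteq> pos \<sigma> v" for u
        using pos_inj[OF dist] CV v sV by blast
      then show ?thesis using linorder_neqE_nat by auto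
    qed
    have "card (C - {v}) = r v + card {u\<in>C. pos \<sigma> v < pos \<sigma> u}"
      unfolding split r_def by (rule card_Un_disjoint) (use fC in auto)
    hence gt: "int (card {u\<in>C. pos \<sigma> v < pos \<sigma> u}) = int ?m - 1 - int (r v)"
    proof -
      have "card C > 0" using v fC card_gt_0_iff by blast
      then show ?thesis using \<open>card (C - {v}) = _\<close> v fC by (simp add: card_Diff_singleton)
    qed
    have cNR: "int (card (NR V E v \<sigma>)) = int ?m - 1 - int (r v) + int (card (T - P))"
      unfolding NR using card_Un_disjoint[OF _ _ d1(2)] fC fT gt by auto
    show ?thesis unfolding imbalance_def using cNL cNR by simp
  qed
  have inj: "inj_on (pos \<sigma>) C" using pos_inj[OF dist] CV sV by (intro inj_onI) blast
  have bij: "bij_betw r C {..<?m}" unfolding r_def by (rule rank_bij[OF fC inj])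
  have "(\<Sum>v\<in>C. imbalance V E v \<sigma>) = (\<Sum>v\<in>C. \<bar>2 * int (r v) - (int ?m - 1) + ?d\<bar>)"
    using imb by simp
  also have "\<dots> = (\<Sum>i<?m. \<bar>2 * int i - (int ?m - 1) + ?d\<bar>)"
    using sum.reindex_bij_betw[OF bij, of "\<lambda>i. \<bar>2 * int i - (int ?m - 1) + ?d\<bar>"] by simp
  finally show ?thesis unfolding Ssum_def .
qed


lemma twin_S: assumes g: "graph V E" and tc: "twin_cover V E S" and c: "component_minus V E S C"
  and u: "u \<in> C" and v: "v \<in> C"
  shows "nbhd V E u \<inter> S = nbhd V E v \<inter> S"
proof -
  have tw: "true_twins V E C" using tc c unfolding twin_cover_def by blast
  hence "closed_nbhd V E u = closed_nbhd V E v" using u v unfolding true_twins_def by blast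
  moreover have "u \<notin> S" "v \<notin> S" using comp_facts(1)[OF g tc c u] u v by auto
  ultimately have "insert u (nbhd V E u) \<inter> S = insert v (nbhd V E v) \<inter> S"
    "u \<notin> S" "v \<notin> S" unfolding closed_nbhd_def by simp_all
  then show ?thesis by simp
qed

lemma prefix_eq: assumes lay: "layout V \<sigma>" and fS: "finite S" and SV: "S \<subseteq> V"
  and v: "v \<in> V" and w: "w \<in> V"
  and cd: "card {s\<in>S. before \<sigma> s v} = card {s\<in>S. before \<sigma> s w}"
  shows "{s\<in>S. before \<sigma> s v} = {s\<in>S. before \<sigma> s w}"
proof -
  have dist: "distinct \<sigma>" and sV: "set \<sigma> = V" using lay unfolding layout_def by auto
  have sub: "{s\<in>S. before \<sigma> s a} \<subseteq> {s\<in>S. before \<sigma> s b}"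
    if "a \<in> V" "b \<in> V" "pos \<sigma> a \<le> pos \<sigma> b" for a b
    using that SV unfolding before_iff[OF dist] sV by auto
  show ?thesis
  proof (cases "pos \<sigma> v \<le> pos \<sigma> w")
    case True
    show ?thesis by (rule card_subset_eq) (use sub[OF v w True] fS cd in auto)
  next
    case False
    show ?thesis by (rule card_subset_eq[symmetric]) (use sub[OF w v] False fS cd in auto)
  qed
qed

theorem corollary3:
  fixes V :: "'a set" and E :: "'a \<Rightarrow> 'a \<Rightarrow> bool" and S Ci Cj :: "'a set"
    and k :: nat and \<sigma> :: "'a list" and q :: int
  assumes "graph V E"
    and "twin_cover V E S" and "card S = k"
    and "component_minus V E S Ci" and "component_minus V E S Cj"
    and "card Ci > k" and "card Cj > k"
    and "card Ci mod 2 = card Cj mod 2"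
    and "\<forall>u\<in>Ci. \<forall>w\<in>Cj. nbhd V E u \<inter> S = nbhd V E w \<inter> S"
    and "layout V \<sigma>"
    and "\<forall>v\<in>Ci \<union> Cj. int (location S \<sigma> v) = q"
  shows "excess_imbalance V E Ci \<sigma> = excess_imbalance V E Cj \<sigma>"
proof -
  note g = assms(1) and tc = assms(2) and ci = assms(4) and cj = assms(5) and lay = assms(10)
  have fV: "finite V" using g unfolding graph_def by blast
  have SV: "S \<subseteq> V" using tc unfolding twin_cover_def by blast
  have fS: "finite S" using finite_subset[OF SV fV] .
  have "Ci \<noteq> {}" "Cj \<noteq> {}" using assms(6,7) by auto
  then obtain u0 w0 where u0: "u0 \<in> Ci" and w0: "w0 \<in> Cj" by blast
  have CiV: "Ci \<subseteq> V" using comp_facts(1)[OF g tc ci u0] by blast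
  have CjV: "Cj \<subseteq> V" using comp_facts(1)[OF g tc cj w0] by blast
  define T where "T = nbhd V E u0 \<inter> S"
  define P where "P = {s\<in>S. before \<sigma> s u0}"
  have Ti: "\<forall>v\<in>Ci. nbhd V E v \<inter> S = T" unfolding T_def using twin_S[OF g tc ci] u0 by blast
  have Tj: "\<forall>v\<in>Cj. nbhd V E v \<inter> S = T" unfolding T_def
    using twin_S[OF g tc cj] u0 w0 assms(9) by metis
  have Pall: "{s\<in>S. before \<sigma> s v} = P" if "v \<in> Ci \<union> Cj" for v
  proof -
    have "int (location S \<sigma> v) = int (location S \<sigma> u0)" using assms(11) that u0 by auto
    hence "card {s\<in>S. before \<sigma> s v} = card {s\<in>S. before \<sigma> s u0}" unfolding location_def by simp
    then show ?thesis unfolding P_def using prefix_eq[OF lay fS SV] that u0 CiV CjV by blast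
  qed
  define d where "d = int (card (T \<inter> P)) - int (card (T - P))"
  have TS: "T \<subseteq> S" unfolding T_def by blast
  have fT: "finite T" using finite_subset[OF TS fS] .
  have "card T = card (T \<inter> P) + card (T - P)"
    using card_Un_disjoint[of "T \<inter> P" "T - P"] fT by (metis Int_Diff_Un Int_Diff_disjoint finite_Diff finite_Int)
  moreover have "card T \<le> k" using card_mono[OF fS TS] assms(3) by simp
  ultimately have dk: "\<bar>d\<bar> \<le> int k" unfolding d_def by linarith
  have si: "(\<Sum>v\<in>Ci. imbalance V E v \<sigma>) = Ssum (card Ci) d"
    unfolding d_def by (rule comp_sum[OF g tc ci lay]) (use u0 Ti Pall in auto)
  have sj: "(\<Sum>v\<in>Cj. imbalance V E v \<sigma>) = Ssum (card Cj) d"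
    unfolding d_def by (rule comp_sum[OF g tc cj lay]) (use w0 Tj Pall in auto)
  show ?thesis unfolding excess_imbalance_def si sj gamma_eq
    by (rule Ssum_eq) (use dk assms(6,7,8) in auto)
qed

end
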